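(* Let $p\in[1,\infty]$ with Hölder conjugate $q$, let $R_0\in\mathbb{R}^{\mathcal{S}\times\mathcal{A}}$, $\alpha>0$, and $\mathcal{R}_p=\{R:\|R-R_0\|_p\le\alpha\}$. Then for every stationary policy $\pi\in\Pi$, the robust return satisfies $$\rho^\pi_{\mathcal{R}_p}:=\min_{R\in\mathcal{R}_p}\rho^\pi_R=\rho^\pi_{R_0}-\alpha\|d^\pi\|_q.$$
   Context: Finite MDP with finite state space $\mathcal{S}$, finite action space $\mathcal{A}$, transition kernel $P$, discount $\gamma\in[0,1)$, initial distribution $\mu$ with $\mu(s)>0$ for all $s$. $\Pi$ is the set of stationary randomized policies, $\pi_s(a)=\pi(a|s)$, $P^\pi(s'|s)=\sum_a\pi_s(a)P(s'|s,a)$. Occupancy measures: $d^\pi=\mu^\top(I-\gamma P^\pi)^{-1}\in\mathbb{R}^{\mathcal{S}}$, $d^\pi(s,a)=d^\pi(s)\pi_s(a)$; norms $\|\cdot\|_p,\|\cdot\|_q$ are taken over $\mathcal{S}\times\mathcal{A}$. Return: $\rho^\pi_R=\sum_{s,a}d^\pi(s,a)R(s,a)$. *)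

theory Defs
  imports "HOL-Analysis.Analysis"
begin

text \<open>Finite MDP: states of finite type 's, actions of finite type 'a.
  Transition kernel P s a s', policy pi s a = pi(a|s), initial distribution mu.\<close>

definition Ppi :: "('s::finite \<Rightarrow> 'a::finite \<Rightarrow> real) \<Rightarrow> ('s \<Rightarrow> 'a \<Rightarrow> 's \<Rightarrow> real) \<Rightarrow> real^'s^'s" where
  "Ppi pol P = (\<chi> s s'. \<Sum>a\<in>UNIV. pol s a * P s a s')"

definition occ_state :: "('s::finite \<Rightarrow> real) \<Rightarrow> real \<Rightarrow> ('s \<Rightarrow> 'a::finite \<Rightarrow> 's \<Rightarrow> real)
    \<Rightarrow> ('s \<Rightarrow> 'a \<Rightarrow> real) \<Rightarrow> 's \<Rightarrow> real" where
  "occ_state mu gamma P pol =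
     (\<lambda>s. ((\<chi> s. mu s) v* matrix_inv (mat 1 - gamma *\<^sub>R Ppi pol P)) $ s)"

definition occ :: "('s::finite \<Rightarrow> real) \<Rightarrow> real \<Rightarrow> ('s \<Rightarrow> 'a::finite \<Rightarrow> 's \<Rightarrow> real)
    \<Rightarrow> ('s \<Rightarrow> 'a \<Rightarrow> real) \<Rightarrow> 's \<times> 'a \<Rightarrow> real" where
  "occ mu gamma P pol = (\<lambda>(s,a). occ_state mu gamma P pol s * pol s a)"

definition ret :: "('s::finite \<Rightarrow> real) \<Rightarrow> real \<Rightarrow> ('s \<Rightarrow> 'a::finite \<Rightarrow> 's \<Rightarrow> real)
    \<Rightarrow> ('s \<Rightarrow> 'a \<Rightarrow> real) \<Rightarrow> ('s \<times> 'a \<Rightarrow> real) \<Rightarrow> real" where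
  "ret mu gamma P pol R = (\<Sum>sa\<in>UNIV. occ mu gamma P pol sa * R sa)"

definition lpnorm :: "ereal \<Rightarrow> ('i::finite \<Rightarrow> real) \<Rightarrow> real" where
  "lpnorm p x = (if p = \<infinity> then Max (range (\<lambda>i. \<bar>x i\<bar>))
                 else (\<Sum>i\<in>UNIV. \<bar>x i\<bar> powr real_of_ereal p) powr (1 / real_of_ereal p))"

definition hconj :: "ereal \<Rightarrow> ereal" where
  "hconj p = (if p = \<infinity> then 1 else if p = 1 then \<infinity>
              else ereal (real_of_ereal p / (real_of_ereal p - 1)))"

end

theory Submission imports Defs begin

lemma mult_sgn_self: "(x::real) * sgn x = \<bar>x\<bar>"
  by (cases "x < 0") (auto simp: sgn_if)

lemma holder_real:
  fixes x y :: "'i::finite \<Rightarrow> real" and p q :: real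
  assumes pq: "p > 1" "q > 1" "1/p + 1/q = 1"
    and x: "\<And>i. x i \<ge> 0" and y: "\<And>i. y i \<ge> 0"
  shows "(\<Sum>i\<in>UNIV. x i * y i) \<le> (\<Sum>i\<in>UNIV. x i powr p) powr (1/p) * (\<Sum>i\<in>UNIV. y i powr q) powr (1/q)"
proof -
  define SA where "SA = (\<Sum>i\<in>UNIV. x i powr p)"
  define SB where "SB = (\<Sum>i\<in>UNIV. y i powr q)"
  define A where "A = SA powr (1/p)"
  define B where "B = SB powr (1/q)"
  have SA0: "SA \<ge> 0" unfolding SA_def by (simp add: sum_nonneg)
  have SB0: "SB \<ge> 0" unfolding SB_def by (simp add: sum_nonneg)
  show ?thesis
  proof (cases "SA = 0 \<or> SB = 0")
    case True
    then have "(\<forall>i. x i = 0) \<or> (\<forall>i. y i = 0)"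
      unfolding SA_def SB_def using x y
      by (subst (asm) sum_nonneg_eq_0_iff; simp)+
    then show ?thesis by auto
  next
    case False
    then have SAp: "SA > 0" and SBp: "SB > 0" using SA0 SB0 by auto
    have Ap: "A > 0" and Bp: "B > 0" using SAp SBp by (auto simp: A_def B_def)
    have ApA: "A powr p = SA" using SAp pq by (simp add: A_def powr_powr)
    have BpB: "B powr q = SB" using SBp pq by (simp add: B_def powr_powr)
    have "(\<Sum>i\<in>UNIV. (x i / A) * (y i / B)) \<le> (\<Sum>i\<in>UNIV. (x i / A) powr p / p + (y i / B) powr q / q)"
      by (rule sum_mono, rule Youngs_inequality) (use pq x y Ap Bp in auto)
    also have "\<dots> = (\<Sum>i\<in>UNIV. x i powr p) / (A powr p) / p + (\<Sum>i\<in>UNIV. y i powr q) / (B powr q) / q"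
      using x y Ap Bp by (simp add: sum.distrib powr_divide sum_divide_distrib)
    also have "\<dots> = 1" using ApA BpB SAp SBp pq by (simp add: SA_def[symmetric] SB_def[symmetric])
    finally have "(\<Sum>i\<in>UNIV. x i * y i) / (A * B) \<le> 1"
      by (simp add: sum_divide_distrib)
    then show ?thesis using Ap Bp by (simp add: A_def B_def SA_def SB_def divide_le_eq)
  qed
qed

lemma lpnorm_nonneg: "lpnorm p (x::'i::finite \<Rightarrow> real) \<ge> 0"
proof (cases "p = \<infinity>")
  case True
  have "\<bar>x undefined\<bar> \<le> Max (range (\<lambda>i. \<bar>x i\<bar>))" by (rule Max_ge) auto
  then have "0 \<le> Max (range (\<lambda>i. \<bar>x i\<bar>))" by (meson abs_ge_zero order_trans)
  then show ?thesis using True by (simp add: lpnorm_def)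
qed (simp add: lpnorm_def)

lemma duality:
  fixes d :: "'i::finite \<Rightarrow> real" and p :: ereal and alpha :: real
  assumes p: "1 \<le> p" and alpha: "alpha > 0"
  shows "\<bar>\<Sum>i\<in>UNIV. d i * u i\<bar> \<le> lpnorm (hconj p) d * lpnorm p u"
    and "\<exists>u. lpnorm p u \<le> alpha \<and> (\<Sum>i\<in>UNIV. d i * u i) = - alpha * lpnorm (hconj p) d"
proof -
  have tri: "\<bar>\<Sum>i\<in>UNIV. d i * u i\<bar> \<le> (\<Sum>i\<in>UNIV. \<bar>d i\<bar> * \<bar>u i\<bar>)"
    using sum_abs[of "\<lambda>i. d i * u i" UNIV] by (simp add: abs_mult)
  consider "p = \<infinity>" | "p = 1" | r where "p = ereal r" "r > 1"
  proof (cases p)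
    case (real r)
    then show ?thesis using that p by (cases "r = 1") (auto simp: one_ereal_def)
  qed (use that p in auto)
  then have "\<bar>\<Sum>i\<in>UNIV. d i * u i\<bar> \<le> lpnorm (hconj p) d * lpnorm p u \<and>
     (\<exists>u. lpnorm p u \<le> alpha \<and> (\<Sum>i\<in>UNIV. d i * u i) = - alpha * lpnorm (hconj p) d)"
  proof cases
    case 1
    have q: "lpnorm (hconj p) d = (\<Sum>i\<in>UNIV. \<bar>d i\<bar>)" using 1
      by (simp add: hconj_def lpnorm_def sum_nonneg)
    have M: "\<And>i. \<bar>u i\<bar> \<le> lpnorm p u" using 1 by (simp add: lpnorm_def)
    have "(\<Sum>i\<in>UNIV. \<bar>d i\<bar> * \<bar>u i\<bar>) \<le> (\<Sum>i\<in>UNIV. \<bar>d i\<bar> * lpnorm p u)"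
      by (rule sum_mono) (simp add: M mult_left_mono)
    then have H: "\<bar>\<Sum>i\<in>UNIV. d i * u i\<bar> \<le> lpnorm (hconj p) d * lpnorm p u"
      using tri q by (simp add: sum_distrib_right)
    define v where "v = (\<lambda>i. - alpha * sgn (d i))"
    have "lpnorm p v \<le> alpha" using 1 alpha
      by (simp add: lpnorm_def v_def abs_mult abs_sgn_eq)
    moreover have "(\<Sum>i\<in>UNIV. d i * v i) = - alpha * lpnorm (hconj p) d"
      by (simp add: q v_def sum_distrib_left mult_sgn_self mult.left_commute)
    ultimately show ?thesis using H by blast
  next
    case 2
    have q: "lpnorm p u = (\<Sum>i\<in>UNIV. \<bar>u i\<bar>)" using 2
      by (simp add: lpnorm_def sum_nonneg)
    have qd: "lpnorm (hconj p) d = Max (range (\<lambda>i. \<bar>d i\<bar>))" using 2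
      by (simp add: hconj_def lpnorm_def)
    have M: "\<And>i. \<bar>d i\<bar> \<le> lpnorm (hconj p) d" using qd by simp
    have "(\<Sum>i\<in>UNIV. \<bar>d i\<bar> * \<bar>u i\<bar>) \<le> (\<Sum>i\<in>UNIV. lpnorm (hconj p) d * \<bar>u i\<bar>)"
      by (rule sum_mono) (simp add: M mult_right_mono)
    then have H: "\<bar>\<Sum>i\<in>UNIV. d i * u i\<bar> \<le> lpnorm (hconj p) d * lpnorm p u"
      using tri q by (simp add: sum_distrib_left)
    have "Max (range (\<lambda>i. \<bar>d i\<bar>)) \<in> range (\<lambda>i. \<bar>d i\<bar>)" by (rule Max_in) auto
    then obtain i0 where i0: "\<bar>d i0\<bar> = lpnorm (hconj p) d"
      using qd by (metis (no_types, lifting) imageE)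
    define v where "v = (\<lambda>i. if i = i0 then - alpha * sgn (d i0) else 0)"
    have "lpnorm p v = (\<Sum>i\<in>UNIV. \<bar>v i\<bar>)" using 2 by (simp add: lpnorm_def sum_nonneg)
    also have "\<dots> = (\<Sum>i\<in>UNIV. if i = i0 then \<bar>v i0\<bar> else 0)"
      by (rule sum.cong) (auto simp: v_def)
    also have "\<dots> = \<bar>v i0\<bar>" by simp
    also have "\<dots> = alpha * \<bar>sgn (d i0)\<bar>" using alpha by (simp add: v_def abs_mult)
    finally have "lpnorm p v \<le> alpha" using alpha
      by (simp add: abs_sgn_eq)
    moreover have "(\<Sum>i\<in>UNIV. d i * v i) = - alpha * lpnorm (hconj p) d"
    proof -
      have "(\<Sum>i\<in>UNIV. d i * v i) = (\<Sum>i\<in>UNIV. if i = i0 then d i0 * v i0 else 0)"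
        by (rule sum.cong) (auto simp: v_def)
      also have "\<dots> = - alpha * (d i0 * sgn (d i0))" by (simp add: v_def)
      finally show ?thesis by (simp add: mult_sgn_self i0)
    qed
    ultimately show ?thesis using H by blast
  next
    case 3
    define s where "s = r / (r - 1)"
    have s1: "s > 1" using 3 by (simp add: s_def)
    have rs: "1/r + 1/s = 1" using 3 by (simp add: s_def field_simps)
    have hq: "hconj p = ereal s" using 3 by (simp add: hconj_def s_def)
    have nd: "lpnorm (hconj p) d = (\<Sum>i\<in>UNIV. \<bar>d i\<bar> powr s) powr (1/s)"
      by (simp add: hq lpnorm_def)
    have nu: "\<And>u. lpnorm p u = (\<Sum>i\<in>UNIV. \<bar>u i\<bar> powr r) powr (1/r)"
      using 3 by (simp add: lpnorm_def)
    have H: "\<bar>\<Sum>i\<in>UNIV. d i * u i\<bar> \<le> lpnorm (hconj p) d * lpnorm p u"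
      using tri holder_real[OF s1 3(2), of "\<lambda>i. \<bar>d i\<bar>" "\<lambda>i. \<bar>u i\<bar>"] rs nd nu[of u]
      by (simp add: add.commute)
    define N where "N = lpnorm (hconj p) d"
    define S where "S = (\<Sum>i\<in>UNIV. \<bar>d i\<bar> powr s)"
    have S0: "S \<ge> 0" by (simp add: S_def sum_nonneg)
    have NS: "N = S powr (1/s)" by (simp add: N_def S_def nd)
    have "\<exists>v. lpnorm p v \<le> alpha \<and> (\<Sum>i\<in>UNIV. d i * v i) = - alpha * N"
    proof (cases "S = 0")
      case True
      then have "\<forall>i. \<bar>d i\<bar> powr s = 0" unfolding S_def
        by (subst (asm) sum_nonneg_eq_0_iff) auto
      then have d0: "\<And>i. d i = 0" by simp
      have "lpnorm p (\<lambda>i::'i. 0::real) \<le> alpha" using nu[of "\<lambda>i::'i. 0::real"] alpha by simp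
      then show ?thesis using True NS d0 by (intro exI[of _ "\<lambda>i. 0"]) simp
    next
      case False
      then have Sp: "S > 0" using S0 by simp
      have Np: "N > 0" using Sp NS by simp
      have NsS: "N powr s = S" using Sp s1 by (simp add: NS powr_powr)
      define v where "v = (\<lambda>i. - alpha * sgn (d i) * \<bar>d i\<bar> powr (s - 1) / N powr (s - 1))"
      have av: "\<bar>v i\<bar> = alpha * \<bar>d i\<bar> powr (s - 1) / N powr (s - 1)" for i
        using alpha by (cases "d i = 0") (auto simp: v_def abs_mult abs_sgn_eq)
      have rs': "(s - 1) * r = s" using 3 by (simp add: s_def field_simps)
      have avr: "\<bar>v i\<bar> powr r = alpha powr r * \<bar>d i\<bar> powr s / S" for i
        using alpha Np
        by (simp add: av powr_divide powr_mult powr_powr rs' NsS)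
      have "(\<Sum>i\<in>UNIV. \<bar>v i\<bar> powr r) = alpha powr r"
        using Sp by (simp add: avr sum_divide_distrib[symmetric] sum_distrib_left[symmetric] S_def[symmetric])
      then have nv: "lpnorm p v = alpha"
        unfolding nu[of v] using alpha 3(2) by (simp add: powr_powr)
      have dv: "d i * v i = - alpha * \<bar>d i\<bar> powr s / N powr (s - 1)" for i
      proof -
        have e: "(d i * sgn (d i)) * \<bar>d i\<bar> powr (s - 1) = \<bar>d i\<bar> powr s"
          using s1 by (cases "d i = 0") (auto simp: mult_sgn_self powr_mult_base)
        have "d i * v i = - alpha * ((d i * sgn (d i)) * \<bar>d i\<bar> powr (s - 1)) / N powr (s - 1)"
          by (simp add: v_def)
        then show ?thesis using e by simp
      qed
      have SN: "S / N powr (s - 1) = N"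
        using Np by (simp add: NsS[symmetric] powr_diff)
      have "(\<Sum>i\<in>UNIV. d i * v i) = (\<Sum>i\<in>UNIV. (- alpha / N powr (s - 1)) * \<bar>d i\<bar> powr s)"
        by (rule sum.cong) (auto simp: dv)
      also have "\<dots> = (- alpha / N powr (s - 1)) * S"
        by (simp add: S_def sum_distrib_left)
      also have "\<dots> = - alpha * N" using SN by (metis mult.commute times_divide_eq_right minus_mult_left)
      finally have "(\<Sum>i\<in>UNIV. d i * v i) = - alpha * N" .
      then show ?thesis using nv by auto
    qed
    then show ?thesis using H N_def by blast
  qed
  then show "\<bar>\<Sum>i\<in>UNIV. d i * u i\<bar> \<le> lpnorm (hconj p) d * lpnorm p u"
    and "\<exists>u. lpnorm p u \<le> alpha \<and> (\<Sum>i\<in>UNIV. d i * u i) = - alpha * lpnorm (hconj p) d"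
    by blast+
qed

theorem corollary1:
  fixes P :: "'s::finite \<Rightarrow> 'a::finite \<Rightarrow> 's \<Rightarrow> real"
    and mu :: "'s \<Rightarrow> real" and gamma :: real
    and pol :: "'s \<Rightarrow> 'a \<Rightarrow> real"
    and R0 :: "'s \<times> 'a \<Rightarrow> real" and alpha :: real and p :: ereal
  assumes P_nonneg: "\<And>s a s'. P s a s' \<ge> 0"
    and P_sum: "\<And>s a. (\<Sum>s'\<in>UNIV. P s a s') = 1"
    and gamma: "0 \<le> gamma" "gamma < 1"
    and mu_pos: "\<And>s. mu s > 0" and mu_sum: "(\<Sum>s\<in>UNIV. mu s) = 1"
    and pol_nonneg: "\<And>s a. pol s a \<ge> 0"
    and pol_sum: "\<And>s. (\<Sum>a\<in>UNIV. pol s a) = 1"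
    and p: "1 \<le> p"
    and alpha: "alpha > 0"
  shows "(\<exists>R. lpnorm p (\<lambda>sa. R sa - R0 sa) \<le> alpha \<and>
              ret mu gamma P pol R = ret mu gamma P pol R0 - alpha * lpnorm (hconj p) (occ mu gamma P pol))
         \<and> (\<forall>R. lpnorm p (\<lambda>sa. R sa - R0 sa) \<le> alpha \<longrightarrow>
              ret mu gamma P pol R0 - alpha * lpnorm (hconj p) (occ mu gamma P pol) \<le> ret mu gamma P pol R)"
proof -
  define d where "d = occ mu gamma P pol"
  define N where "N = lpnorm (hconj p) d"
  have lin: "ret mu gamma P pol R = ret mu gamma P pol R0 + (\<Sum>sa\<in>UNIV. d sa * (R sa - R0 sa))" for R
    unfolding ret_def d_def by (simp add: right_diff_distrib sum_subtractf)
  have N0: "N \<ge> 0" by (simp add: N_def lpnorm_nonneg)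
  obtain u where u: "lpnorm p u \<le> alpha" "(\<Sum>i\<in>UNIV. d i * u i) = - alpha * N"
    using duality(2)[OF p alpha, of d] N_def by blast
  have ex: "\<exists>R. lpnorm p (\<lambda>sa. R sa - R0 sa) \<le> alpha \<and>
              ret mu gamma P pol R = ret mu gamma P pol R0 - alpha * N"
  proof (intro exI[of _ "\<lambda>sa. R0 sa + u sa"] conjI)
    show "lpnorm p (\<lambda>sa. R0 sa + u sa - R0 sa) \<le> alpha" using u(1) by simp
    show "ret mu gamma P pol (\<lambda>sa. R0 sa + u sa) = ret mu gamma P pol R0 - alpha * N"
      using lin[of "\<lambda>sa. R0 sa + u sa"] u(2) by simp
  qed
  have lb: "ret mu gamma P pol R0 - alpha * N \<le> ret mu gamma P pol R"
    if R: "lpnorm p (\<lambda>sa. R sa - R0 sa) \<le> alpha" for R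
  proof -
    have "\<bar>\<Sum>sa\<in>UNIV. d sa * (R sa - R0 sa)\<bar> \<le> N * lpnorm p (\<lambda>sa. R sa - R0 sa)"
      using duality(1)[OF p alpha, of d "\<lambda>sa. R sa - R0 sa"] N_def by simp
    also have "\<dots> \<le> N * alpha" using R N0 by (simp add: mult_left_mono)
    finally show ?thesis using lin[of R] by (simp add: algebra_simps abs_le_iff)
  qed
  show ?thesis using ex lb unfolding N_def d_def by blast
qed

end
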